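(* For all $\mathbf u\in\{0,1\}^{\mathbb N}$: $\inf(L(\mathbf u))=L(\inf(\mathbf u))$, $\inf(R(\mathbf u))=R(\inf(\mathbf u))$, and $0\,\sup(L(\mathbf u))=L(\sup(\mathbf u))$. If $\inf(\mathbf u)=\inf_1(\mathbf u)$, then $\inf(M(\mathbf u))=0\,M(\inf(\mathbf u))$. If $\sup(\mathbf u)=\sup_0(\mathbf u)$, then $\sup(R(\mathbf u))=1\,R(\sup(\mathbf u))$ and $\sup(M(\mathbf u))=1\,M(\sup(\mathbf u))$. Moreover: (a) For each $\sigma\in\{L,M,R\}^*$ there is a suffix $w$ of $\sigma(1)$ such that $\inf_1(\sigma(\mathbf u))=\inf(\sigma(\mathbf u))=w\,\sigma(\inf(\mathbf u))$ for all $\mathbf u\in\{0,1\}^{\mathbb N}$ with $\inf(\mathbf u)=\inf_1(\mathbf u)$. (b) For each $\sigma\in\{L,M,R\}^*M\cup\{L,M,R\}^*R$ there is a suffix $w$ of $\sigma(0)$ such that $\sup_0(\sigma(\mathbf u))=\sup(\sigma(\mathbf u))=w\,\sigma(\sup(\mathbf u))$ for all $\mathbf u\in\{0,1\}^{\mathbb N}$ with $\sup(\mathbf u)=\sup_0(\mathbf u)$. (c) For each $\sigma\in\{L,M,R\}^*L$ there is a prefix $w$ of $\sigma(\overline0)$ such that $w\,\sup_0(\sigma(\mathbf u))=w\,\sup(\sigma(\mathbf u))=\sigma(\sup(\mathbf u))$ for all $\mathbf u\in\{0,1\}^{\mathbb N}$ with $\sup(\mathbf u)=\sup_0(\mathbf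 u)$.
   Context: Infinite words over $\{0,1\}$ are ordered lexicographically; $\overline{w}$ denotes infinite repetition of $w$. For $\mathbf u=u_1u_2\cdots\in\{0,1\}^{\mathbb N}$, $\sup(\mathbf u)$ and $\inf(\mathbf u)$ are the lexicographic supremum and infimum of $\{u_ku_{k+1}\cdots:k\ge1\}$, $\inf_1(\mathbf u)=\inf\{u_{k+1}u_{k+2}\cdots:k\ge1,\ u_k=1\}$ and $\sup_0(\mathbf u)=\sup\{u_{k+1}u_{k+2}\cdots:k\ge1,\ u_k=0\}$. The substitutions (monoid morphisms on words, extended letterwise to infinite words) are $L:0\mapsto0,1\mapsto01$; $M:0\mapsto01,1\mapsto10$; $R:0\mapsto01,1\mapsto1$. $\{L,M,R\}^*$ is the monoid generated by them under composition (including the identity); $\{L,M,R\}^*X=\{\tau X:\tau\in\{L,M,R\}^*\}$ for $X\in\{L,M,R\}$. *)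

theory Defs
  imports Main "HOL-Library.Sublist"
begin

text \<open>Infinite binary words are functions nat => bool, with False = letter 0 and
  True = letter 1; positions are 0-indexed.  Finite words are bool lists.\<close>

type_synonym iword = "nat \<Rightarrow> bool"

definition lex_less :: "iword \<Rightarrow> iword \<Rightarrow> bool" where
  "lex_less u v \<longleftrightarrow> (\<exists>n. (\<forall>i<n. u i = v i) \<and> \<not> u n \<and> v n)"

definition lex_le :: "iword \<Rightarrow> iword \<Rightarrow> bool" where
  "lex_le u v \<longleftrightarrow> u = v \<or> lex_less u v"

definition lex_sup :: "iword set \<Rightarrow> iword" where
  "lex_sup S = (THE s. (\<forall>x\<in>S. lex_le x s) \<and> (\<forall>t. (\<forall>x\<in>S. lex_le x t) \<longrightarrow> lex_le s t))"

definition lex_inf :: "iword set \<Rightarrow> iword" where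
  "lex_inf S = (THE s. (\<forall>x\<in>S. lex_le s x) \<and> (\<forall>t. (\<forall>x\<in>S. lex_le t x) \<longrightarrow> lex_le t s))"

text \<open>shift k u = u_{k+1} u_{k+2} ... in 1-indexed notation.\<close>
definition shift :: "nat \<Rightarrow> iword \<Rightarrow> iword" where
  "shift k u = (\<lambda>i. u (i + k))"

definition wsup :: "iword \<Rightarrow> iword" where
  "wsup u = lex_sup {shift k u | k. True}"

definition winf :: "iword \<Rightarrow> iword" where
  "winf u = lex_inf {shift k u | k. True}"

definition winf1 :: "iword \<Rightarrow> iword" where
  "winf1 u = lex_inf {shift (Suc k) u | k. u k}"

definition wsup0 :: "iword \<Rightarrow> iword" where
  "wsup0 u = lex_sup {shift (Suc k) u | k. \<not> u k}"

datatype sub = SL | SM | SR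

fun img :: "sub \<Rightarrow> bool \<Rightarrow> bool list" where
  "img SL False = [False]"
| "img SL True = [False, True]"
| "img SM False = [False, True]"
| "img SM True = [True, False]"
| "img SR False = [False, True]"
| "img SR True = [True]"

text \<open>The substitution X1 o X2 o ... o Xk represented by the list [X1,...,Xk]
  (the empty list is the identity); its image of a letter.\<close>
fun morph :: "sub list \<Rightarrow> bool \<Rightarrow> bool list" where
  "morph [] a = [a]"
| "morph (X # xs) a = concat (map (img X) (morph xs a))"

text \<open>Extension of a letter-to-word morphism with nonempty images to infinite words.\<close>
definition apply_inf :: "(bool \<Rightarrow> bool list) \<Rightarrow> iword \<Rightarrow> iword" where
  "apply_inf \<phi> u n = concat (map (\<phi> \<circ> u) [0..<Suc n]) ! n"

definition subst :: "sub list \<Rightarrow> iword \<Rightarrow> iword" where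
  "subst \<sigma> u = apply_inf (morph \<sigma>) u"

definition prep :: "bool list \<Rightarrow> iword \<Rightarrow> iword" where
  "prep w u = (\<lambda>n. if n < length w then w ! n else u (n - length w))"

end

theory Submission
  imports Defs
begin


definition agree :: "nat \<Rightarrow> iword \<Rightarrow> iword \<Rightarrow> bool" where
  "agree n x y \<longleftrightarrow> (\<forall>i<n. x i = y i)"

lemma lex_less_irrefl: "\<not> lex_less x x"
  by (auto simp: lex_less_def)

lemma lex_less_trans: "lex_less x y \<Longrightarrow> lex_less y z \<Longrightarrow> lex_less x z"
  unfolding lex_less_def
proof (elim exE conjE)
  fix n m
  assume a: "\<forall>i<n. x i = y i" "\<not> x n" "y n" and b: "\<forall>i<m. y i = z i" "\<not> y m" "z m"
  show "\<exists>n. (\<forall>i<n. x i = z i) \<and> \<not> x n \<and> z n"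
  proof (cases "n < m")
    case True thus ?thesis using a b by (intro exI[of _ n]) auto
  next
    case False
    hence "m < n" using a b by (cases "m = n") auto
    thus ?thesis using a b by (intro exI[of _ m]) auto
  qed
qed

lemma lex_less_asym: "lex_less x y \<Longrightarrow> \<not> lex_less y x"
  using lex_less_trans lex_less_irrefl by blast

lemma lex_less_total: "x \<noteq> y \<Longrightarrow> lex_less x y \<or> lex_less y x"
proof -
  assume "x \<noteq> y"
  then obtain i where "x i \<noteq> y i" by auto
  define n where "n = (LEAST i. x i \<noteq> y i)"
  have n1: "x n \<noteq> y n" unfolding n_def by (rule LeastI) fact
  have n2: "\<forall>i<n. x i = y i" unfolding n_def using not_less_Least by blast
  show ?thesis
  proof (cases "y n")
    case True thus ?thesis using n1 n2 unfolding lex_less_def by auto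
  next
    case False thus ?thesis using n1 n2 unfolding lex_less_def by (metis (full_types))
  qed
qed

lemma lex_le_refl: "lex_le x x" by (simp add: lex_le_def)
lemma lex_le_trans: "lex_le x y \<Longrightarrow> lex_le y z \<Longrightarrow> lex_le x z"
  unfolding lex_le_def using lex_less_trans by blast
lemma lex_le_antisym: "lex_le x y \<Longrightarrow> lex_le y x \<Longrightarrow> x = y"
  unfolding lex_le_def using lex_less_asym by blast
lemma lex_le_total: "lex_le x y \<or> lex_le y x"
  unfolding lex_le_def using lex_less_total by blast
lemma lex_le_less_trans: "lex_le x y \<Longrightarrow> lex_less y z \<Longrightarrow> lex_less x z"
  unfolding lex_le_def using lex_less_trans by blast
lemma not_le_less: "\<not> lex_le x y \<Longrightarrow> lex_less y x"
  unfolding lex_le_def using lex_less_total by blast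

lemma first_less: "\<not> x 0 \<Longrightarrow> y 0 \<Longrightarrow> lex_less x y"
  unfolding lex_less_def by (intro exI[of _ 0]) auto

lemma first_le: "\<not> x 0 \<Longrightarrow> y 0 \<Longrightarrow> lex_le x y"
  using first_less lex_le_def by blast

lemma le_first_False: "lex_le x y \<Longrightarrow> \<not> y 0 \<Longrightarrow> \<not> x 0"
  using first_less lex_le_less_trans lex_less_irrefl by blast

lemma le_first_True: "lex_le x y \<Longrightarrow> x 0 \<Longrightarrow> y 0"
  using le_first_False by blast

lemma le_zero: "lex_le x (\<lambda>_. False) \<Longrightarrow> x = (\<lambda>_. False)"
  unfolding lex_le_def lex_less_def by auto

lemma one_le: "lex_le (\<lambda>_. True) x \<Longrightarrow> x = (\<lambda>_. True)"
  unfolding lex_le_def lex_less_def by auto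

lemma prep_Nil[simp]: "prep [] x = x" by (simp add: prep_def)
lemma prep_append: "prep (a @ b) x = prep a (prep b x)"
  by (auto simp: prep_def nth_append fun_eq_iff)
lemma shift_0[simp]: "shift 0 u = u" by (simp add: shift_def)
lemma shift_shift: "shift a (shift b u) = shift (a + b) u"
  by (simp add: shift_def add.assoc)
lemma shift_apply[simp]: "shift k u i = u (i + k)" by (simp add: shift_def)
lemma shift_prep: "r \<le> length w \<Longrightarrow> shift r (prep w x) = prep (drop r w) x"
  by (auto simp: prep_def fun_eq_iff add.commute)
lemma shift_prep_len: "shift (length w) (prep w x) = x"
  by (auto simp: prep_def fun_eq_iff)
lemma prep_inj: "prep w x = prep w y \<Longrightarrow> x = y"
  by (metis shift_prep_len)
lemma shift_split: "shift k u = prep [u k] (shift (Suc k) u)"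
  by (auto simp: prep_def fun_eq_iff)
lemma prep_0: "prep (a # w) x 0 = a" by (simp add: prep_def)

lemma prep_less: "lex_less (prep w x) (prep w y) \<longleftrightarrow> lex_less x y"
proof
  assume "lex_less (prep w x) (prep w y)"
  then obtain n where n: "\<forall>i<n. prep w x i = prep w y i" "\<not> prep w x n" "prep w y n"
    unfolding lex_less_def by blast
  have "n \<ge> length w"
  proof (rule ccontr)
    assume "\<not> n \<ge> length w"
    hence "prep w x n = prep w y n" by (simp add: prep_def)
    thus False using n by simp
  qed
  have "\<forall>i<n - length w. x i = y i"
  proof (intro allI impI)
    fix i assume "i < n - length w"
    hence "prep w x (i + length w) = prep w y (i + length w)" using n(1) by auto
    thus "x i = y i" by (simp add: prep_def)
  qed
  moreover have "\<not> x (n - length w)" "y (n - length w)" using n \<open>n \<ge> length w\<close> by (auto simp: prep_def)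
  ultimately show "lex_less x y" unfolding lex_less_def by blast
next
  assume "lex_less x y"
  then obtain n where n: "\<forall>i<n. x i = y i" "\<not> x n" "y n" unfolding lex_less_def by blast
  show "lex_less (prep w x) (prep w y)" unfolding lex_less_def prep_def
    using n by (intro exI[of _ "n + length w"]) auto
qed

lemma prep_le: "lex_le (prep w x) (prep w y) \<longleftrightarrow> lex_le x y"
  unfolding lex_le_def using prep_less prep_inj by blast

lemma agree_prep: "agree n x y \<Longrightarrow> agree n (prep w x) (prep w y)"
  by (auto simp: agree_def prep_def)
lemma agree_shift1: "agree (Suc n) x y \<Longrightarrow> agree n (shift 1 x) (shift 1 y)"
  by (auto simp: agree_def)
lemma agree_sym: "agree n x y \<Longrightarrow> agree n y x" by (auto simp: agree_def)

fun gr :: "iword set \<Rightarrow> bool \<Rightarrow> nat \<Rightarrow> bool list" where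
  "gr S b 0 = []"
| "gr S b (Suc n) = gr S b n @ [if (\<exists>x\<in>S. (\<forall>i<n. x i = gr S b n ! i) \<and> x n = b) then b else \<not> b]"

lemma gr_len[simp]: "length (gr S b n) = n" by (induct n) auto

lemma gr_mono: "m \<le> n \<Longrightarrow> i < m \<Longrightarrow> gr S b n ! i = gr S b m ! i"
proof (induct n)
  case 0 thus ?case by simp
next
  case (Suc n)
  show ?case
  proof (cases "m = Suc n")
    case True thus ?thesis by simp
  next
    case False
    hence "m \<le> n" using Suc by simp
    thus ?thesis using Suc by (simp add: nth_append)
  qed
qed

definition grw :: "iword set \<Rightarrow> bool \<Rightarrow> iword" where
  "grw S b i = gr S b (Suc i) ! i"

lemma grw_gr: "i < n \<Longrightarrow> grw S b i = gr S b n ! i"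
  unfolding grw_def using gr_mono[of "Suc i" n i] by simp

lemma gr_inv: "S \<noteq> {} \<Longrightarrow> \<exists>x\<in>S. \<forall>i<n. x i = gr S b n ! i"
proof (induct n)
  case 0 thus ?case by auto
next
  case (Suc n)
  then obtain x where x: "x \<in> S" "\<forall>i<n. x i = gr S b n ! i" by blast
  show ?case
  proof (cases "\<exists>x\<in>S. (\<forall>i<n. x i = gr S b n ! i) \<and> x n = b")
    case True
    then obtain y where "y \<in> S" "\<forall>i<n. y i = gr S b n ! i" "y n = b" by blast
    thus ?thesis using True by (intro bexI[of _ y]) (auto simp: nth_append less_Suc_eq)
  next
    case False
    hence "x n = (\<not> b)" using x by auto
    thus ?thesis using False x by (intro bexI[of _ x]) (auto simp: nth_append less_Suc_eq)
  qed
qed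

lemma grw_approx: "S \<noteq> {} \<Longrightarrow> \<exists>x\<in>S. agree n x (grw S b)"
  using gr_inv[of S n b] grw_gr[of _ n S b] unfolding agree_def by metis

lemma grw_bound: "x \<in> S \<Longrightarrow> agree n x (grw S b) \<Longrightarrow> x n = b \<Longrightarrow> grw S b n = b"
proof -
  assume a: "x \<in> S" "agree n x (grw S b)" "x n = b"
  have "\<forall>i<n. x i = gr S b n ! i" using a(2) grw_gr[of _ n S b] by (auto simp: agree_def)
  hence "grw S b n = gr S b (Suc n) ! n" by (simp add: grw_def)
  also have "\<dots> = b" using a \<open>\<forall>i<n. x i = gr S b n ! i\<close> by (auto simp: nth_append)
  finally show ?thesis .
qed

lemma sup_eqI:
  assumes ub: "\<forall>x\<in>S. lex_le x c" and ap: "\<forall>n. \<exists>x\<in>S. agree n x c"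
  shows "lex_sup S = c"
proof -
  have lub: "lex_le c t" if t: "\<forall>x\<in>S. lex_le x t" for t
  proof (rule ccontr)
    assume "\<not> lex_le c t"
    hence "lex_less t c" by (rule not_le_less)
    then obtain n where n: "\<forall>i<n. t i = c i" "\<not> t n" "c n" unfolding lex_less_def by blast
    obtain x where x: "x \<in> S" "agree (Suc n) x c" using ap by blast
    have "lex_less t x" unfolding lex_less_def using n x(2)
      by (intro exI[of _ n]) (auto simp: agree_def)
    thus False using t x(1) lex_le_less_trans lex_less_irrefl by blast
  qed
  show ?thesis unfolding lex_sup_def
    by (rule the_equality) (use ub lub lex_le_antisym in blast)+
qed

lemma inf_eqI:
  assumes lb: "\<forall>x\<in>S. lex_le c x" and ap: "\<forall>n. \<exists>x\<in>S. agree n x c"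
  shows "lex_inf S = c"
proof -
  have glb: "lex_le t c" if t: "\<forall>x\<in>S. lex_le t x" for t
  proof (rule ccontr)
    assume "\<not> lex_le t c"
    hence "lex_less c t" by (rule not_le_less)
    then obtain n where n: "\<forall>i<n. c i = t i" "\<not> c n" "t n" unfolding lex_less_def by blast
    obtain x where x: "x \<in> S" "agree (Suc n) x c" using ap by blast
    have "lex_less x t" unfolding lex_less_def using n x(2)
      by (intro exI[of _ n]) (auto simp: agree_def)
    thus False using t x(1) lex_le_less_trans lex_less_irrefl by blast
  qed
  show ?thesis unfolding lex_inf_def
    by (rule the_equality) (use lb glb lex_le_antisym in blast)+
qed

lemma sup_props:
  assumes "S \<noteq> {}"
  shows "\<forall>x\<in>S. lex_le x (lex_sup S)" "\<forall>n. \<exists>x\<in>S. agree n x (lex_sup S)"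
proof -
  have ub: "\<forall>x\<in>S. lex_le x (grw S True)"
  proof
    fix x assume x: "x \<in> S"
    show "lex_le x (grw S True)"
    proof (rule ccontr)
      assume "\<not> lex_le x (grw S True)"
      hence "lex_less (grw S True) x" by (rule not_le_less)
      then obtain n where "\<forall>i<n. grw S True i = x i" "\<not> grw S True n" "x n"
        unfolding lex_less_def by blast
      thus False using grw_bound[OF x, of n True] by (auto simp: agree_def)
    qed
  qed
  have ap: "\<forall>n. \<exists>x\<in>S. agree n x (grw S True)" using grw_approx assms by blast
  have "lex_sup S = grw S True" using sup_eqI ub ap by blast
  thus "\<forall>x\<in>S. lex_le x (lex_sup S)" "\<forall>n. \<exists>x\<in>S. agree n x (lex_sup S)" using ub ap by simp_all
qed

lemma inf_props:
  assumes "S \<noteq> {}"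
  shows "\<forall>x\<in>S. lex_le (lex_inf S) x" "\<forall>n. \<exists>x\<in>S. agree n x (lex_inf S)"
proof -
  have lb: "\<forall>x\<in>S. lex_le (grw S False) x"
  proof
    fix x assume x: "x \<in> S"
    show "lex_le (grw S False) x"
    proof (rule ccontr)
      assume "\<not> lex_le (grw S False) x"
      hence "lex_less x (grw S False)" by (rule not_le_less)
      then obtain n where "\<forall>i<n. x i = grw S False i" "\<not> x n" "grw S False n"
        unfolding lex_less_def by blast
      thus False using grw_bound[OF x, of n False] by (auto simp: agree_def)
    qed
  qed
  have ap: "\<forall>n. \<exists>x\<in>S. agree n x (grw S False)" using grw_approx assms by blast
  have "lex_inf S = grw S False" using inf_eqI lb ap by blast
  thus "\<forall>x\<in>S. lex_le (lex_inf S) x" "\<forall>n. \<exists>x\<in>S. agree n x (lex_inf S)" using lb ap by simp_all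
qed

lemma zero_le: "lex_le (\<lambda>_. False) x"
  using lex_le_total le_zero by metis
lemma le_one: "lex_le x (\<lambda>_. True)"
  using lex_le_total one_le by metis

lemma sup_empty: "lex_sup {} = (\<lambda>_. False)"
  unfolding lex_sup_def
proof (rule the_equality)
  show "(\<forall>x\<in>{}. lex_le x (\<lambda>_. False)) \<and> (\<forall>t. (\<forall>x\<in>{}. lex_le x t) \<longrightarrow> lex_le (\<lambda>_. False) t)"
    using zero_le by auto
  fix s assume "(\<forall>x\<in>{}. lex_le x s) \<and> (\<forall>t. (\<forall>x\<in>{}. lex_le x t) \<longrightarrow> lex_le s t)"
  hence "lex_le s (\<lambda>_. False)" by auto
  thus "s = (\<lambda>_. False)" by (rule le_zero)
qed

lemma inf_empty: "lex_inf {} = (\<lambda>_. True)"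
  unfolding lex_inf_def
proof (rule the_equality)
  show "(\<forall>x\<in>{}. lex_le (\<lambda>_. True) x) \<and> (\<forall>t. (\<forall>x\<in>{}. lex_le t x) \<longrightarrow> lex_le t (\<lambda>_. True))"
    using le_one by auto
  fix s assume "(\<forall>x\<in>{}. lex_le s x) \<and> (\<forall>t. (\<forall>x\<in>{}. lex_le t x) \<longrightarrow> lex_le t s)"
  hence "lex_le (\<lambda>_. True) s" by auto
  thus "s = (\<lambda>_. True)" by (rule one_le)
qed



definition Cw :: "(bool \<Rightarrow> bool list) \<Rightarrow> iword \<Rightarrow> nat \<Rightarrow> bool list" where
  "Cw \<phi> u k = concat (map (\<phi> \<circ> u) [0..<k])"

definition nonem :: "(bool \<Rightarrow> bool list) \<Rightarrow> bool" where
  "nonem \<phi> \<longleftrightarrow> (\<forall>a. \<phi> a \<noteq> [])"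

lemma Cw_0[simp]: "Cw \<phi> u 0 = []" by (simp add: Cw_def)
lemma Cw_Suc: "Cw \<phi> u (Suc k) = Cw \<phi> u k @ \<phi> (u k)" by (simp add: Cw_def)

lemma Cw_len: "nonem \<phi> \<Longrightarrow> length (Cw \<phi> u k) \<ge> k"
proof (induct k)
  case (Suc k)
  have "length (\<phi> (u k)) \<ge> 1" using Suc(2) unfolding nonem_def by (cases "\<phi> (u k)") auto
  thus ?case using Suc by (simp add: Cw_Suc)
qed simp

lemma Cw_shift: "Cw \<phi> u (k + j) = Cw \<phi> u k @ Cw \<phi> (shift k u) j"
  by (induct j) (simp_all add: Cw_Suc add.commute)

lemma Cw_mono_app: "k \<le> m \<Longrightarrow> \<exists>z. Cw \<phi> u m = Cw \<phi> u k @ z"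
  using Cw_shift[of \<phi> u k "m - k"] by auto

lemma apply_def2: "apply_inf \<phi> u n = Cw \<phi> u (Suc n) ! n"
  by (simp add: apply_inf_def Cw_def)

lemma Cw_key:
  assumes ne: "nonem \<phi>" and n: "n < length (Cw \<phi> u k)"
  shows "apply_inf \<phi> u n = Cw \<phi> u k ! n"
proof (cases "k \<le> Suc n")
  case True
  then obtain z where "Cw \<phi> u (Suc n) = Cw \<phi> u k @ z" using Cw_mono_app by blast
  thus ?thesis using n by (simp add: apply_def2 nth_append)
next
  case False
  then obtain z where z: "Cw \<phi> u k = Cw \<phi> u (Suc n) @ z" using Cw_mono_app[of "Suc n" k] by auto
  have "n < length (Cw \<phi> u (Suc n))" using Cw_len[OF ne, where u=u and k="Suc n"] by simp
  thus ?thesis using z by (simp add: apply_def2 nth_append)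
qed

lemma Cw_agree: "agree k u u' \<Longrightarrow> Cw \<phi> u k = Cw \<phi> u' k"
  unfolding Cw_def agree_def by (intro arg_cong[where f=concat] map_cong) auto

lemma apply_agree: "nonem \<phi> \<Longrightarrow> agree n u u' \<Longrightarrow> agree n (apply_inf \<phi> u) (apply_inf \<phi> u')"
proof -
  assume ne: "nonem \<phi>" and a: "agree n u u'"
  have e: "Cw \<phi> u n = Cw \<phi> u' n" using Cw_agree[OF a] .
  show ?thesis unfolding agree_def
  proof (intro allI impI)
    fix i assume "i < n"
    hence "i < length (Cw \<phi> u n)" "i < length (Cw \<phi> u' n)" using Cw_len[OF ne] by (meson less_le_trans)+
    thus "apply_inf \<phi> u i = apply_inf \<phi> u' i" using Cw_key[OF ne] e by metis
  qed
qed

lemma apply_shift_block: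
  assumes ne: "nonem \<phi>"
  shows "shift (length (Cw \<phi> u k)) (apply_inf \<phi> u) = apply_inf \<phi> (shift k u)"
proof
  fix i
  have e: "Cw \<phi> u (k + Suc i) = Cw \<phi> u k @ Cw \<phi> (shift k u) (Suc i)" by (rule Cw_shift)
  have l: "i < length (Cw \<phi> (shift k u) (Suc i))" using Cw_len[OF ne, where u="shift k u" and k="Suc i"] by simp
  have len: "length (Cw \<phi> u (k + Suc i)) = length (Cw \<phi> u k) + length (Cw \<phi> (shift k u) (Suc i))"
    unfolding e by simp
  have "i + length (Cw \<phi> u k) < length (Cw \<phi> u (k + Suc i))" using l len by linarith
  hence "apply_inf \<phi> u (i + length (Cw \<phi> u k)) = Cw \<phi> u (k + Suc i) ! (i + length (Cw \<phi> u k))"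
    by (rule Cw_key[OF ne])
  also have "\<dots> = Cw \<phi> (shift k u) (Suc i) ! i" unfolding e by (simp add: nth_append)
  also have "\<dots> = apply_inf \<phi> (shift k u) i" using Cw_key[OF ne l] by simp
  finally show "shift (length (Cw \<phi> u k)) (apply_inf \<phi> u) i = apply_inf \<phi> (shift k u) i" by simp
qed

lemma apply_prep_block:
  assumes ne: "nonem \<phi>"
  shows "apply_inf \<phi> u = prep (Cw \<phi> u k) (apply_inf \<phi> (shift k u))"
proof
  fix n
  show "apply_inf \<phi> u n = prep (Cw \<phi> u k) (apply_inf \<phi> (shift k u)) n"
  proof (cases "n < length (Cw \<phi> u k)")
    case True thus ?thesis using Cw_key[OF ne True] by (simp add: prep_def)
  next
    case False
    have "apply_inf \<phi> (shift k u) (n - length (Cw \<phi> u k)) = apply_inf \<phi> u n"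
      using apply_shift_block[OF ne, of u k] False
      by (metis le_add_diff_inverse2 not_less shift_apply)
    thus ?thesis using False by (simp add: prep_def)
  qed
qed

lemma apply_prep1:
  assumes ne: "nonem \<phi>"
  shows "apply_inf \<phi> (prep [a] x) = prep (\<phi> a) (apply_inf \<phi> x)"
proof -
  have "Cw \<phi> (prep [a] x) 1 = \<phi> a" by (simp add: Cw_def prep_def)
  moreover have "shift 1 (prep [a] x) = x" using shift_prep_len[of "[a]" x] by simp
  ultimately show ?thesis using apply_prep_block[OF ne, of "prep [a] x" 1] by simp
qed

lemma apply_prep:
  assumes ne: "nonem \<phi>"
  shows "apply_inf \<phi> (prep p x) = prep (concat (map \<phi> p)) (apply_inf \<phi> x)"
proof (induct p)
  case (Cons a p)
  have "prep (a # p) x = prep [a] (prep p x)" using prep_append[of "[a]" p x] by simp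
  thus ?case using Cons apply_prep1[OF ne] by (simp add: prep_append)
qed simp

lemma apply_at0: "nonem \<phi> \<Longrightarrow> apply_inf \<phi> u 0 = \<phi> (u 0) ! 0"
  using Cw_key[of \<phi> 0 u 1] by (simp add: Cw_def nonem_def)

lemma apply_block_r:
  assumes ne: "nonem \<phi>" and r: "r \<le> length (\<phi> (u k))"
  shows "shift (length (Cw \<phi> u k) + r) (apply_inf \<phi> u) = prep (drop r (\<phi> (u k))) (apply_inf \<phi> (shift (Suc k) u))"
proof -
  have "shift (length (Cw \<phi> u k) + r) (apply_inf \<phi> u) = shift r (shift (length (Cw \<phi> u k)) (apply_inf \<phi> u))"
    by (simp add: shift_shift add.commute)
  also have "\<dots> = shift r (apply_inf \<phi> (shift k u))" by (simp add: apply_shift_block[OF ne])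
  also have "\<dots> = shift r (prep (\<phi> (u k)) (apply_inf \<phi> (shift (Suc k) u)))"
    by (subst shift_split) (simp add: apply_prep1[OF ne])
  also have "\<dots> = prep (drop r (\<phi> (u k))) (apply_inf \<phi> (shift (Suc k) u))" using r by (simp add: shift_prep)
  finally show ?thesis .
qed

lemma apply_letter:
  assumes ne: "nonem \<phi>" and r: "r < length (\<phi> (u k))"
  shows "apply_inf \<phi> u (length (Cw \<phi> u k) + r) = \<phi> (u k) ! r"
proof -
  have "shift (length (Cw \<phi> u k) + r) (apply_inf \<phi> u) 0 = prep (drop r (\<phi> (u k))) (apply_inf \<phi> (shift (Suc k) u)) 0"
    using apply_block_r[OF ne, of r u k] r by simp
  thus ?thesis using r by (simp add: prep_def)
qed

lemma decomp:
  assumes ne: "nonem \<phi>"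
  shows "\<exists>k r. r < length (\<phi> (u k)) \<and> j = length (Cw \<phi> u k) + r"
proof -
  have ex: "j < length (Cw \<phi> u (Suc j))" using Cw_len[OF ne, where u=u and k="Suc j"] by simp
  define k where "k = (LEAST k. j < length (Cw \<phi> u (Suc k)))"
  have k1: "j < length (Cw \<phi> u (Suc k))" unfolding k_def by (rule LeastI[of _ j]) (rule ex)
  have k2: "length (Cw \<phi> u k) \<le> j"
  proof (cases k)
    case 0 thus ?thesis by simp
  next
    case (Suc k')
    have "\<not> j < length (Cw \<phi> u (Suc k'))" using not_less_Least[of k' "\<lambda>k. j < length (Cw \<phi> u (Suc k))"]
      Suc k_def by simp
    thus ?thesis using Suc by simp
  qed
  show ?thesis using k1 k2 by (intro exI[of _ k] exI[of _ "j - length (Cw \<phi> u k)"]) (auto simp: Cw_Suc)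
qed

lemma concat_map_concat:
  "concat (map (\<lambda>a. concat (map \<phi> (\<psi> a))) xs) = concat (map \<phi> (concat (map \<psi> xs)))"
  by (induct xs) auto

lemma nonem_comp: "nonem \<phi> \<Longrightarrow> nonem \<psi> \<Longrightarrow> nonem (\<lambda>a. concat (map \<phi> (\<psi> a)))"
  unfolding nonem_def by (metis Nil_is_append_conv concat.simps(2) list.exhaust list.simps(9))

lemma apply_comp:
  assumes n1: "nonem \<phi>" and n2: "nonem \<psi>"
  shows "apply_inf \<phi> (apply_inf \<psi> u) = apply_inf (\<lambda>a. concat (map \<phi> (\<psi> a))) u"
proof
  fix n
  define \<chi> where "\<chi> = (\<lambda>a. concat (map \<phi> (\<psi> a)))"
  have n3: "nonem \<chi>" unfolding \<chi>_def using nonem_comp[OF n1 n2] .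
  define P where "P = Cw \<psi> u (Suc n)"
  define v where "v = apply_inf \<psi> u"
  have mp: "map v [0..<length P] = P"
    by (rule nth_equalityI) (simp_all add: v_def Cw_key[OF n2] P_def)
  have "Cw \<phi> v (length P) = concat (map \<phi> (map v [0..<length P]))" by (simp add: Cw_def)
  also have "\<dots> = concat (map \<phi> P)" using mp by simp
  also have "\<dots> = Cw \<chi> u (Suc n)" unfolding P_def Cw_def \<chi>_def
    by (simp add: concat_map_concat[symmetric] comp_def)
  finally have e: "Cw \<phi> v (length P) = Cw \<chi> u (Suc n)" .
  have l: "n < length (Cw \<chi> u (Suc n))" using Cw_len[OF n3, where u=u and k="Suc n"] by simp
  have "apply_inf \<phi> v n = Cw \<phi> v (length P) ! n" using l e by (intro Cw_key[OF n1]) simp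
  also have "\<dots> = apply_inf \<chi> u n" using Cw_key[OF n3 l] e by simp
  finally show "apply_inf \<phi> (apply_inf \<psi> u) n = apply_inf (\<lambda>a. concat (map \<phi> (\<psi> a))) u n"
    by (simp add: v_def \<chi>_def)
qed

lemma img_nonem: "nonem (img X)"
  unfolding nonem_def by (intro allI, cases X; case_tac a) auto

lemma morph_nonem: "nonem (morph \<sigma>)"
proof (induct \<sigma>)
  case Nil thus ?case by (simp add: nonem_def)
next
  case (Cons X xs)
  have "nonem (\<lambda>a. concat (map (img X) (morph xs a)))" by (rule nonem_comp[OF img_nonem Cons])
  thus ?case by simp
qed

lemma concat_map_single: "concat (map (\<lambda>b. [b]) l) = l" by (induct l) auto

lemma morph_append: "morph (xs @ ys) a = concat (map (morph xs) (morph ys a))"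
proof (induct xs)
  case Nil thus ?case by (simp add: concat_map_single)
next
  case (Cons X xs)
  thus ?case by (simp add: concat_map_concat[symmetric] )
qed

lemma subst_append: "subst (xs @ ys) u = subst xs (subst ys u)"
proof -
  have "morph (xs @ ys) = (\<lambda>a. concat (map (morph xs) (morph ys a)))" by (rule ext) (rule morph_append)
  thus ?thesis unfolding subst_def using apply_comp[OF morph_nonem morph_nonem] by simp
qed

lemma subst_Nil: "subst [] u = u"
proof
  fix n
  have "concat (map (\<lambda>i. [u i]) [0..<Suc n]) = map u [0..<Suc n]" by (induct n) auto
  thus "subst [] u n = u n" unfolding subst_def apply_inf_def
    by (simp add: comp_def del: upt_Suc)
qed

lemma subst_single: "subst [X] = apply_inf (img X)"
proof -
  have e: "morph [X] = img X" by (rule ext) simp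
  show ?thesis by (rule ext) (simp only: subst_def e)
qed



abbreviation Ph :: "sub \<Rightarrow> iword \<Rightarrow> iword" where
  "Ph X \<equiv> apply_inf (img X)"

lemmas ine = img_nonem

lemma Ph_split: "Ph X (shift k u) = prep (img X (u k)) (Ph X (shift (Suc k) u))"
  by (subst shift_split) (simp add: apply_prep1[OF ine])

lemma Ph_at0: "Ph X u 0 = img X (u 0) ! 0"
  by (rule apply_at0[OF ine])

lemma suf_decomp:
  "\<exists>k r. r < length (img X (u k)) \<and>
     shift j (Ph X u) = prep (drop r (img X (u k))) (Ph X (shift (Suc k) u)) \<and>
     shift (Suc j) (Ph X u) = prep (drop (Suc r) (img X (u k))) (Ph X (shift (Suc k) u)) \<and>
     Ph X u j = img X (u k) ! r"
proof -
  obtain k r where kr: "r < length (img X (u k))" "j = length (Cw (img X) u k) + r"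
    using decomp[OF ine] by blast
  have "Suc j = length (Cw (img X) u k) + Suc r" using kr by simp
  thus ?thesis using kr apply_block_r[OF ine, where r=r and u=u and k=k] apply_block_r[OF ine, where r="Suc r" and u=u and k=k]
      apply_letter[OF ine, where r=r and u=u and k=k]
    by (intro exI[of _ k] exI[of _ r]) simp
qed

lemma suf_at:
  assumes "r < length (img X (u k))"
  shows "\<exists>j. shift j (Ph X u) = prep (drop r (img X (u k))) (Ph X (shift (Suc k) u)) \<and>
     shift (Suc j) (Ph X u) = prep (drop (Suc r) (img X (u k))) (Ph X (shift (Suc k) u)) \<and>
     Ph X u j = img X (u k) ! r"
proof -
  have "Suc (length (Cw (img X) u k) + r) = length (Cw (img X) u k) + Suc r" by simp
  thus ?thesis using assms apply_block_r[OF ine, where r=r and u=u and k=k] apply_block_r[OF ine, where r="Suc r" and u=u and k=k]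
      apply_letter[OF ine, where r=r and u=u and k=k]
    by (intro exI[of _ "length (Cw (img X) u k) + r"]) simp
qed

lemma block0: "\<exists>j. shift j (Ph X u) = Ph X (shift k u)"
  using apply_shift_block[OF ine] by blast

lemma mono_Ph:
  assumes "lex_le x y" shows "lex_le (Ph X x) (Ph X y)"
proof (cases "x = y")
  case True thus ?thesis by (simp add: lex_le_refl)
next
  case False
  hence "lex_less x y" using assms by (simp add: lex_le_def)
  then obtain n where n: "\<forall>i<n. x i = y i" "\<not> x n" "y n" unfolding lex_less_def by blast
  have C: "Cw (img X) x n = Cw (img X) y n" using n(1) by (intro Cw_agree) (simp add: agree_def)
  have ex: "Ph X x = prep (Cw (img X) x n) (prep (img X False) (Ph X (shift (Suc n) x)))"
    using apply_prep_block[OF ine, of X x n] Ph_split[of X n x] n(2) by simp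
  have ey: "Ph X y = prep (Cw (img X) x n) (prep (img X True) (Ph X (shift (Suc n) y)))"
    using apply_prep_block[OF ine, of X y n] Ph_split[of X n y] n(3) C by simp
  have "lex_less (prep (img X False) (Ph X (shift (Suc n) x))) (prep (img X True) (Ph X (shift (Suc n) y)))"
  proof (cases X)
    case SL
    have "\<not> Ph X (shift (Suc n) x) 0" using SL Ph_at0[of X] by (cases "shift (Suc n) x 0") auto
    hence "lex_less (Ph X (shift (Suc n) x)) (prep [True] (Ph X (shift (Suc n) y)))"
      by (intro first_less) (auto simp: prep_def)
    hence "lex_less (prep [False] (Ph X (shift (Suc n) x))) (prep [False] (prep [True] (Ph X (shift (Suc n) y))))"
      by (simp add: prep_less)
    thus ?thesis using SL by (simp add: prep_append[symmetric])
  qed (auto intro: first_less simp: prep_def)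
  thus ?thesis unfolding ex ey lex_le_def by (simp add: prep_less)
qed

lemma wsup_ub: "lex_le (shift k u) (wsup u)"
  using sup_props(1)[of "{shift k u | k. True}"] unfolding wsup_def by blast
lemma wsup_ap: "\<exists>k. agree n (shift k u) (wsup u)"
  using sup_props(2)[of "{shift k u | k. True}"] unfolding wsup_def by blast
lemma winf_lb: "lex_le (winf u) (shift k u)"
  using inf_props(1)[of "{shift k u | k. True}"] unfolding winf_def by blast
lemma winf_ap: "\<exists>k. agree n (shift k u) (winf u)"
  using inf_props(2)[of "{shift k u | k. True}"] unfolding winf_def by blast

lemma wsup_eqI: "(\<forall>j. lex_le (shift j v) c) \<Longrightarrow> (\<forall>n. \<exists>j. agree n (shift j v) c) \<Longrightarrow> wsup v = c"
  unfolding wsup_def by (rule sup_eqI) blast+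
lemma winf_eqI: "(\<forall>j. lex_le c (shift j v)) \<Longrightarrow> (\<forall>n. \<exists>j. agree n (shift j v) c) \<Longrightarrow> winf v = c"
  unfolding winf_def by (rule inf_eqI) blast+
lemma wsup0_eqI: "(\<forall>j. lex_le (shift j v) c) \<Longrightarrow> (\<forall>n. \<exists>j. \<not> v j \<and> agree n (shift (Suc j) v) c) \<Longrightarrow> wsup0 v = c"
  unfolding wsup0_def by (rule sup_eqI) blast+
lemma winf1_eqI: "(\<forall>j. lex_le c (shift j v)) \<Longrightarrow> (\<forall>n. \<exists>j. v j \<and> agree n (shift (Suc j) v) c) \<Longrightarrow> winf1 v = c"
  unfolding winf1_def by (rule inf_eqI) blast+

lemma winf1_lb: "u k \<Longrightarrow> lex_le (winf1 u) (shift (Suc k) u)"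
  using inf_props(1)[of "{shift (Suc k) u | k. u k}"] unfolding winf1_def by blast

lemma winf1_ap:
  assumes h: "winf u = winf1 u"
  shows "\<exists>k. u k \<and> agree n (shift (Suc k) u) (winf u)"
proof (cases "{shift (Suc k) u | k. u k} = {}")
  case True
  hence "winf u = (\<lambda>_. True)" using h inf_empty unfolding winf1_def by simp
  hence "u = (\<lambda>_. True)" using winf_lb[of u 0] one_le by simp
  thus ?thesis using True by auto
next
  case False
  thus ?thesis using inf_props(2)[OF False] h unfolding winf1_def by auto
qed

lemma wsup0_ap:
  assumes h: "wsup u = wsup0 u"
  shows "\<exists>k. \<not> u k \<and> agree n (shift (Suc k) u) (wsup u)"
proof (cases "{shift (Suc k) u | k. \<not> u k} = {}")
  case True
  hence "wsup u = (\<lambda>_. False)" using h sup_empty unfolding wsup0_def by simp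
  hence "u = (\<lambda>_. False)" using wsup_ub[of 0 u] le_zero by simp
  thus ?thesis using True by auto
next
  case False
  thus ?thesis using sup_props(2)[OF False] h unfolding wsup0_def by auto
qed



lemma lt2: "r < Suc (Suc 0) \<Longrightarrow> r = 0 \<or> r = 1" by auto

lemma Ph_zero: "Ph SL (\<lambda>_. False) = (\<lambda>_. False)"
proof
  fix n
  have "concat (map (img SL \<circ> (\<lambda>_. False)) xs) = map (\<lambda>_. False) xs" for xs :: "nat list"
    by (induct xs) auto
  thus "Ph SL (\<lambda>_. False) n = False" unfolding apply_inf_def by (simp del: upt_Suc)
qed

lemma prep_zero: "prep [False] (\<lambda>_. False) = (\<lambda>_. False)"
  by (auto simp: prep_def)

lemma stepL_inf: "winf (Ph SL u) = Ph SL (winf u)"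
proof (rule winf_eqI; intro allI)
  fix j
  obtain k r where kr: "r < length (img SL (u k))"
    "shift j (Ph SL u) = prep (drop r (img SL (u k))) (Ph SL (shift (Suc k) u))"
    using suf_decomp by blast
  show "lex_le (Ph SL (winf u)) (shift j (Ph SL u))"
  proof (cases "r = 0")
    case True
    hence "shift j (Ph SL u) = Ph SL (shift k u)" using kr True by (simp add: Ph_split[of _ k u])
    thus ?thesis using mono_Ph[OF winf_lb] by simp
  next
    case False
    have uk: "u k" using kr(1) False by (cases "u k") auto
    hence "r = 1" using kr(1) False by auto
    note uk this
    hence "shift j (Ph SL u) 0" using kr by (simp add: prep_def)
    moreover have "\<not> Ph SL (winf u) 0" using Ph_at0[of SL] by (cases "winf u 0") auto
    ultimately show ?thesis by (intro first_le)
  qed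
next
  fix n
  obtain k where "agree n (shift k u) (winf u)" using winf_ap by blast
  moreover obtain j where "shift j (Ph SL u) = Ph SL (shift k u)" using block0 by blast
  ultimately show "\<exists>j. agree n (shift j (Ph SL u)) (Ph SL (winf u))" using apply_agree[OF ine] by metis
qed

lemma stepL_inf1:
  assumes h: "winf u = winf1 u"
  shows "winf1 (Ph SL u) = Ph SL (winf u)"
proof (rule winf1_eqI; intro allI)
  fix j show "lex_le (Ph SL (winf u)) (shift j (Ph SL u))"
    using winf_lb[of "Ph SL u" j] stepL_inf by simp
next
  fix n
  obtain k where k: "u k" "agree n (shift (Suc k) u) (winf u)" using winf1_ap[OF h] by blast
  obtain j where "shift (Suc j) (Ph SL u) = Ph SL (shift (Suc k) u)" "Ph SL u j"
    using suf_at[of 1 SL u k] k(1) by auto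
  thus "\<exists>j. Ph SL u j \<and> agree n (shift (Suc j) (Ph SL u)) (Ph SL (winf u))"
    using apply_agree[OF ine k(2)] by metis
qed

lemma stepR_inf: "winf (Ph SR u) = Ph SR (winf u)"
proof (rule winf_eqI; intro allI)
  fix j
  obtain k r where kr: "r < length (img SR (u k))"
    "shift j (Ph SR u) = prep (drop r (img SR (u k))) (Ph SR (shift (Suc k) u))"
    using suf_decomp by blast
  show "lex_le (Ph SR (winf u)) (shift j (Ph SR u))"
  proof (cases "r = 0")
    case True
    hence "shift j (Ph SR u) = Ph SR (shift k u)" using kr True by (simp add: Ph_split[of _ k u])
    thus ?thesis using mono_Ph[OF winf_lb] by simp
  next
    case False
    have uk0: "\<not> u k" using kr(1) False by (cases "u k") auto
    hence "r = 1" using kr(1) False by auto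
    note uk = uk0 this
    hence "shift j (Ph SR u) 0" using kr by (simp add: prep_def)
    moreover have "\<not> winf u 0" using le_first_False[OF winf_lb[of u k]] uk by simp
    hence "\<not> Ph SR (winf u) 0" using Ph_at0[of SR] by simp
    ultimately show ?thesis by (intro first_le)
  qed
next
  fix n
  obtain k where "agree n (shift k u) (winf u)" using winf_ap by blast
  moreover obtain j where "shift j (Ph SR u) = Ph SR (shift k u)" using block0 by blast
  ultimately show "\<exists>j. agree n (shift j (Ph SR u)) (Ph SR (winf u))" using apply_agree[OF ine] by metis
qed

lemma stepR_inf1:
  assumes h: "winf u = winf1 u"
  shows "winf1 (Ph SR u) = Ph SR (winf u)"
proof (rule winf1_eqI; intro allI)
  fix j show "lex_le (Ph SR (winf u)) (shift j (Ph SR u))"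
    using winf_lb[of "Ph SR u" j] stepR_inf by simp
next
  fix n
  obtain k where k: "u k" "agree n (shift (Suc k) u) (winf u)" using winf1_ap[OF h] by blast
  obtain j where "shift (Suc j) (Ph SR u) = Ph SR (shift (Suc k) u)" "Ph SR u j"
    using suf_at[of 0 SR u k] k(1) by auto
  thus "\<exists>j. Ph SR u j \<and> agree n (shift (Suc j) (Ph SR u)) (Ph SR (winf u))"
    using apply_agree[OF ine k(2)] by metis
qed

lemma stepM_inf:
  assumes h: "winf u = winf1 u"
  shows "winf (Ph SM u) = prep [False] (Ph SM (winf u)) \<and> winf1 (Ph SM u) = prep [False] (Ph SM (winf u))"
proof -
  define c where "c = prep [False] (Ph SM (winf u))"
  have lb: "\<forall>j. lex_le c (shift j (Ph SM u))"
  proof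
    fix j
    obtain k r where kr: "r < length (img SM (u k))"
      "shift j (Ph SM u) = prep (drop r (img SM (u k))) (Ph SM (shift (Suc k) u))"
      using suf_decomp by blast
    have r: "r = 0 \<or> r = 1" using kr(1) by (cases "u k") auto
    show "lex_le c (shift j (Ph SM u))"
    proof (cases "u k")
      case True
      show ?thesis
      proof (cases "r = 0")
        case True
        thus ?thesis using kr \<open>u k\<close> by (intro first_le) (auto simp: c_def prep_def)
      next
        case False
        hence "r = 1" using r by simp
        hence e: "shift j (Ph SM u) = prep [False] (Ph SM (shift (Suc k) u))" using kr \<open>u k\<close> by simp
        have "lex_le (winf u) (shift (Suc k) u)" using winf1_lb[of u k] \<open>u k\<close> h by simp
        thus ?thesis unfolding e c_def prep_le by (rule mono_Ph)
      qed
    next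
      case False
      show ?thesis
      proof (cases "r = 0")
        case True
        hence e: "shift j (Ph SM u) = prep [False] (prep [True] (Ph SM (shift (Suc k) u)))"
          using kr \<open>\<not> u k\<close> by (simp add: prep_append[symmetric])
        have "\<not> winf u 0" using le_first_False[OF winf_lb[of u k]] \<open>\<not> u k\<close> by simp
        hence "\<not> Ph SM (winf u) 0" using Ph_at0[of SM] by simp
        hence "lex_le (Ph SM (winf u)) (prep [True] (Ph SM (shift (Suc k) u)))"
          by (intro first_le) (auto simp: prep_def)
        thus ?thesis unfolding e c_def prep_le .
      next
        case False
        hence "r = 1" using r by simp
        thus ?thesis using kr \<open>\<not> u k\<close> by (intro first_le) (auto simp: c_def prep_def)
      qed
    qed
  qed
  have ap: "\<forall>n. \<exists>j. Ph SM u j \<and> agree n (shift (Suc j) (Ph SM u)) c"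
  proof
    fix n
    obtain k where k: "u k" "agree n (shift (Suc k) u) (winf u)" using winf1_ap[OF h] by blast
    obtain j where "shift (Suc j) (Ph SM u) = prep [False] (Ph SM (shift (Suc k) u))" "Ph SM u j"
      using suf_at[of 0 SM u k] k(1) by auto
    thus "\<exists>j. Ph SM u j \<and> agree n (shift (Suc j) (Ph SM u)) c"
      unfolding c_def using agree_prep[OF apply_agree[OF ine k(2)]] by metis
  qed
  have "winf (Ph SM u) = c" using lb ap by (intro winf_eqI) blast+
  moreover have "winf1 (Ph SM u) = c" using lb ap by (intro winf1_eqI) blast+
  ultimately show ?thesis by (simp add: c_def)
qed


lemma stepR_sup:
  assumes h: "wsup u = wsup0 u"
  shows "wsup (Ph SR u) = prep [True] (Ph SR (wsup u)) \<and> wsup0 (Ph SR u) = prep [True] (Ph SR (wsup u))"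
proof -
  define c where "c = prep [True] (Ph SR (wsup u))"
  have ub: "\<forall>j. lex_le (shift j (Ph SR u)) c"
  proof
    fix j
    obtain k r where kr: "r < length (img SR (u k))"
      "shift j (Ph SR u) = prep (drop r (img SR (u k))) (Ph SR (shift (Suc k) u))"
      using suf_decomp by blast
    have t: "lex_le (prep [True] (Ph SR (shift (Suc k) u))) c"
      unfolding c_def prep_le by (rule mono_Ph[OF wsup_ub])
    show "lex_le (shift j (Ph SR u)) c"
    proof (cases "u k")
      case True
      hence "r = 0" using kr by simp
      thus ?thesis using kr True t by simp
    next
      case False
      show ?thesis
      proof (cases "r = 0")
        case True
        thus ?thesis using kr \<open>\<not> u k\<close> by (intro first_le) (auto simp: c_def prep_def)
      next
        case False
        hence "r = 1" using kr \<open>\<not> u k\<close> by simp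
        thus ?thesis using kr \<open>\<not> u k\<close> t by simp
      qed
    qed
  qed
  have ap: "\<forall>n. \<exists>j. \<not> Ph SR u j \<and> agree n (shift (Suc j) (Ph SR u)) c"
  proof
    fix n
    obtain k where k: "\<not> u k" "agree n (shift (Suc k) u) (wsup u)" using wsup0_ap[OF h] by blast
    obtain j where "shift (Suc j) (Ph SR u) = prep [True] (Ph SR (shift (Suc k) u))" "\<not> Ph SR u j"
      using suf_at[of 0 SR u k] k(1) by auto
    thus "\<exists>j. \<not> Ph SR u j \<and> agree n (shift (Suc j) (Ph SR u)) c"
      unfolding c_def using agree_prep[OF apply_agree[OF ine k(2)]] by metis
  qed
  have "wsup (Ph SR u) = c" using ub ap by (intro wsup_eqI) blast+
  moreover have "wsup0 (Ph SR u) = c" using ub ap by (intro wsup0_eqI) blast+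
  ultimately show ?thesis by (simp add: c_def)
qed

lemma stepM_sup:
  assumes h: "wsup u = wsup0 u"
  shows "wsup (Ph SM u) = prep [True] (Ph SM (wsup u)) \<and> wsup0 (Ph SM u) = prep [True] (Ph SM (wsup u))"
proof -
  define c where "c = prep [True] (Ph SM (wsup u))"
  have ub: "\<forall>j. lex_le (shift j (Ph SM u)) c"
  proof
    fix j
    obtain k r where kr: "r < length (img SM (u k))"
      "shift j (Ph SM u) = prep (drop r (img SM (u k))) (Ph SM (shift (Suc k) u))"
      using suf_decomp by blast
    have r: "r = 0 \<or> r = 1" using kr(1) by (cases "u k") auto
    show "lex_le (shift j (Ph SM u)) c"
    proof (cases "u k")
      case True
      show ?thesis
      proof (cases "r = 0")
        case True
        hence e: "shift j (Ph SM u) = prep [True] (prep [False] (Ph SM (shift (Suc k) u)))"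
          using kr \<open>u k\<close> by (simp add: prep_append[symmetric])
        have "wsup u 0" using le_first_True[OF wsup_ub[of k u]] \<open>u k\<close> by simp
        hence "Ph SM (wsup u) 0" using Ph_at0[of SM] by simp
        hence "lex_le (prep [False] (Ph SM (shift (Suc k) u))) (Ph SM (wsup u))"
          by (intro first_le) (auto simp: prep_def)
        thus ?thesis unfolding e c_def prep_le .
      next
        case False
        hence "r = 1" using r by simp
        thus ?thesis using kr \<open>u k\<close> by (intro first_le) (auto simp: c_def prep_def)
      qed
    next
      case False
      show ?thesis
      proof (cases "r = 0")
        case True
        thus ?thesis using kr \<open>\<not> u k\<close> by (intro first_le) (auto simp: c_def prep_def)
      next
        case False
        hence "r = 1" using r by simp
        hence e: "shift j (Ph SM u) = prep [True] (Ph SM (shift (Suc k) u))" using kr \<open>\<not> u k\<close> by simp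
        show ?thesis unfolding e c_def prep_le by (rule mono_Ph[OF wsup_ub])
      qed
    qed
  qed
  have ap: "\<forall>n. \<exists>j. \<not> Ph SM u j \<and> agree n (shift (Suc j) (Ph SM u)) c"
  proof
    fix n
    obtain k where k: "\<not> u k" "agree n (shift (Suc k) u) (wsup u)" using wsup0_ap[OF h] by blast
    obtain j where "shift (Suc j) (Ph SM u) = prep [True] (Ph SM (shift (Suc k) u))" "\<not> Ph SM u j"
      using suf_at[of 0 SM u k] k(1) by auto
    thus "\<exists>j. \<not> Ph SM u j \<and> agree n (shift (Suc j) (Ph SM u)) c"
      unfolding c_def using agree_prep[OF apply_agree[OF ine k(2)]] by metis
  qed
  have "wsup (Ph SM u) = c" using ub ap by (intro wsup_eqI) blast+
  moreover have "wsup0 (Ph SM u) = c" using ub ap by (intro wsup0_eqI) blast+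
  ultimately show ?thesis by (simp add: c_def)
qed

lemma stepL_sup:
  "prep [False] (wsup (Ph SL u)) = Ph SL (wsup u) \<and>
   (wsup u = wsup0 u \<longrightarrow> wsup0 (Ph SL u) = wsup (Ph SL u))"
proof (cases "\<exists>i. u i")
  case False
  hence u0: "u = (\<lambda>_. False)" by auto
  have s0: "wsup (\<lambda>_. False) = (\<lambda>_. False)"
    by (rule wsup_eqI) (auto simp: lex_le_refl agree_def shift_def)
  have s00: "wsup0 (\<lambda>_. False) = (\<lambda>_. False)"
    by (rule wsup0_eqI) (auto simp: lex_le_refl agree_def shift_def)
  show ?thesis unfolding u0 Ph_zero s0 s00 prep_zero by simp
next
  case True
  then obtain i where "u i" by blast
  have M0: "wsup u 0" using le_first_True[OF wsup_ub[of i u]] \<open>u i\<close> by simp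
  define M' where "M' = shift 1 (wsup u)"
  have M: "wsup u = prep [True] M'" unfolding M'_def using shift_split[of 0 "wsup u"] M0 by simp
  define c where "c = prep [True] (Ph SL M')"
  have PM: "Ph SL (wsup u) = prep [False] c"
    unfolding M c_def by (simp add: apply_prep1[OF ine] prep_append[symmetric])
  have ub: "\<forall>j. lex_le (shift j (Ph SL u)) c"
  proof
    fix j
    obtain k r where kr: "r < length (img SL (u k))"
      "shift j (Ph SL u) = prep (drop r (img SL (u k))) (Ph SL (shift (Suc k) u))"
      using suf_decomp by blast
    show "lex_le (shift j (Ph SL u)) c"
    proof (cases "r = 0")
      case True
      have c0: "c 0" by (simp add: c_def prep_def)
      have "\<not> shift j (Ph SL u) 0" using kr True by (cases "u k") (auto simp: prep_def)
      thus ?thesis using c0 by (rule first_le)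
    next
      case False
      have uk: "u k" using kr(1) False by (cases "u k") auto
      hence "r = 1" using kr(1) False by auto
      hence e: "shift j (Ph SL u) = prep [True] (Ph SL (shift (Suc k) u))" using kr uk by simp
      have "lex_le (prep [True] (shift (Suc k) u)) (prep [True] M')"
        using wsup_ub[of k u] shift_split[of k u] uk M by simp
      hence "lex_le (shift (Suc k) u) M'" by (simp add: prep_le)
      thus ?thesis unfolding e c_def prep_le by (rule mono_Ph)
    qed
  qed
  have ap: "\<forall>n. \<exists>j. agree n (shift j (Ph SL u)) c"
  proof
    fix n
    obtain k where k: "agree (Suc n) (shift k u) (wsup u)" using wsup_ap by blast
    hence "shift k u 0 = wsup u 0" unfolding agree_def by (metis zero_less_Suc)
    hence uk: "u k" using M0 by simp
    have a: "agree n (shift (Suc k) u) M'" using agree_shift1[OF k] unfolding M'_def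
      by (simp add: shift_shift)
    obtain j where "shift j (Ph SL u) = prep [True] (Ph SL (shift (Suc k) u))"
      using suf_at[of 1 SL u k] uk by auto
    thus "\<exists>j. agree n (shift j (Ph SL u)) c"
      unfolding c_def using agree_prep[OF apply_agree[OF ine a]] by metis
  qed
  have sc: "wsup (Ph SL u) = c" using ub ap by (intro wsup_eqI) blast+
  have "wsup0 (Ph SL u) = c" if h: "wsup u = wsup0 u"
  proof (rule wsup0_eqI[OF ub]; intro allI)
    fix n
    obtain k where k: "\<not> u k" "agree (Suc n) (shift (Suc k) u) (wsup u)" using wsup0_ap[OF h] by blast
    hence "shift (Suc k) u 0 = wsup u 0" unfolding agree_def by (metis zero_less_Suc)
    hence uk: "u (Suc k)" using M0 by simp
    have a: "agree n (shift (Suc (Suc k)) u) M'" using agree_shift1[OF k(2)] unfolding M'_def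
      by (simp add: shift_shift)
    obtain j where "shift (Suc j) (Ph SL u) = prep [True] (Ph SL (shift (Suc (Suc k)) u))" "\<not> Ph SL u j"
      using suf_at[of 0 SL u "Suc k"] uk by auto
    thus "\<exists>j. \<not> Ph SL u j \<and> agree n (shift (Suc j) (Ph SL u)) c"
      unfolding c_def using agree_prep[OF apply_agree[OF ine a]] by metis
  qed
  thus ?thesis using sc PM by simp
qed



lemma subst_prep: "subst \<tau> (prep p x) = prep (concat (map (morph \<tau>) p)) (subst \<tau> x)"
  unfolding subst_def by (rule apply_prep[OF morph_nonem])

lemma morph_snoc: "morph (\<tau> @ [X]) a = concat (map (morph \<tau>) (img X a))"
  by (simp add: morph_append)

lemma subst_snoc: "subst (\<tau> @ [X]) u = subst \<tau> (Ph X (subst [] u))"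
  by (simp add: subst_append subst_single subst_Nil)

lemma subst_snoc': "subst (\<tau> @ [X]) u = subst \<tau> (Ph X u)"
  using subst_snoc subst_Nil by simp

definition wA :: "sub \<Rightarrow> bool list" where
  "wA X = (if X = SM then [False] else [])"

lemma stepA:
  assumes h: "winf u = winf1 u"
  shows "winf1 (Ph X u) = winf (Ph X u) \<and> winf (Ph X u) = prep (wA X) (Ph X (winf u))"
proof (cases X)
  case SL thus ?thesis using stepL_inf stepL_inf1[OF h] by (simp add: wA_def)
next
  case SR thus ?thesis using stepR_inf stepR_inf1[OF h] by (simp add: wA_def)
next
  case SM thus ?thesis using stepM_inf[OF h] by (simp add: wA_def)
qed

lemma partA:
  "\<exists>w. suffix w (morph \<sigma> True) \<and>
          (\<forall>u. winf u = winf1 u \<longrightarrow>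
             winf1 (subst \<sigma> u) = winf (subst \<sigma> u)
           \<and> winf (subst \<sigma> u) = prep w (subst \<sigma> (winf u)))"
proof (induct \<sigma> rule: rev_induct)
  case Nil
  show ?case by (intro exI[of _ "[]"]) (simp add: subst_Nil)
next
  case (snoc X \<tau>)
  then obtain w where w: "suffix w (morph \<tau> True)"
    "\<And>v. winf v = winf1 v \<Longrightarrow> winf1 (subst \<tau> v) = winf (subst \<tau> v)
           \<and> winf (subst \<tau> v) = prep w (subst \<tau> (winf v))" by blast
  define w2 where "w2 = w @ concat (map (morph \<tau>) (wA X))"
  have suf: "suffix w2 (morph (\<tau> @ [X]) True)"
    using w(1) unfolding w2_def morph_snoc suffix_def by (cases X) (auto simp: wA_def)
  have "winf1 (subst (\<tau> @ [X]) u) = winf (subst (\<tau> @ [X]) u)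
           \<and> winf (subst (\<tau> @ [X]) u) = prep w2 (subst (\<tau> @ [X]) (winf u))"
    if h: "winf u = winf1 u" for u
  proof -
    have s: "winf1 (Ph X u) = winf (Ph X u)" "winf (Ph X u) = prep (wA X) (Ph X (winf u))"
      using stepA[OF h] by auto
    have "winf (subst \<tau> (Ph X u)) = prep w (subst \<tau> (prep (wA X) (Ph X (winf u))))"
      using w(2)[of "Ph X u"] s by simp
    also have "\<dots> = prep w2 (subst (\<tau> @ [X]) (winf u))"
      by (simp add: subst_prep subst_snoc' w2_def prep_append)
    finally show ?thesis using w(2)[of "Ph X u"] s by (simp add: subst_snoc')
  qed
  thus ?case using suf by blast
qed

lemma Ph_sup_MR:
  assumes h: "wsup u = wsup0 u" and X: "X = SM \<or> X = SR"
  shows "wsup (Ph X u) = prep [True] (Ph X (wsup u)) \<and> wsup0 (Ph X u) = wsup (Ph X u)"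
  using X stepR_sup[OF h] stepM_sup[OF h] by auto

lemma img_False_MR: "X = SM \<or> X = SR \<Longrightarrow> img X False = [False, True]" by auto

lemma Cstar:
  "\<exists>w. length w \<le> length (morph \<tau> False) + length (morph \<tau> True) \<and>
     (\<forall>y i. i < length w \<longrightarrow> w ! i = subst \<tau> (prep [False] y) i) \<and>
     (\<forall>v. wsup v = wsup0 v \<longrightarrow> wsup0 (subst \<tau> v) = wsup (subst \<tau> v) \<and>
           prep w (wsup (subst \<tau> v)) = subst \<tau> (prep [False] (wsup v)))"
proof (induct \<tau> rule: rev_induct)
  case Nil
  show ?case by (intro exI[of _ "[False]"]) (simp add: subst_Nil prep_def)
next
  case (snoc Y \<tau>)
  then obtain w where wl: "length w \<le> length (morph \<tau> False) + length (morph \<tau> True)"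
    and wp: "\<And>y i. i < length w \<Longrightarrow> w ! i = subst \<tau> (prep [False] y) i"
    and ws: "\<And>v. wsup v = wsup0 v \<Longrightarrow> wsup0 (subst \<tau> v) = wsup (subst \<tau> v) \<and>
           prep w (wsup (subst \<tau> v)) = subst \<tau> (prep [False] (wsup v))" by blast
  show ?case
  proof (cases "Y = SL")
    case False
    hence Y: "Y = SM \<or> Y = SR" by (cases Y) auto
    have iF: "img Y False = [False, True]" using Y by auto
    have l: "length w \<le> length (morph (\<tau> @ [Y]) False) + length (morph (\<tau> @ [Y]) True)"
      using wl by (simp add: morph_snoc iF)
    have PF: "Ph Y (prep [False] x) = prep [False] (prep [True] (Ph Y x))" for x
      by (simp add: apply_prep1[OF ine] iF prep_append[symmetric])
    have p: "\<forall>y i. i < length w \<longrightarrow> w ! i = subst (\<tau> @ [Y]) (prep [False] y) i"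
      using wp by (simp add: subst_snoc' PF)
    have s: "wsup0 (subst (\<tau> @ [Y]) v) = wsup (subst (\<tau> @ [Y]) v) \<and>
           prep w (wsup (subst (\<tau> @ [Y]) v)) = subst (\<tau> @ [Y]) (prep [False] (wsup v))"
      if h: "wsup v = wsup0 v" for v
    proof -
      have st: "wsup (Ph Y v) = prep [True] (Ph Y (wsup v))" "wsup0 (Ph Y v) = wsup (Ph Y v)"
        using Ph_sup_MR[OF h Y] by auto
      show ?thesis using ws[of "Ph Y v"] st by (simp add: subst_snoc' PF)
    qed
    show ?thesis using l p s by blast
  next
    case True
    define w2 where "w2 = morph \<tau> False @ w"
    have l: "length w2 \<le> length (morph (\<tau> @ [Y]) False) + length (morph (\<tau> @ [Y]) True)"
      using wl True by (simp add: morph_snoc w2_def)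
    have PF: "Ph SL (prep [False] x) = prep [False] (Ph SL x)" for x
      by (simp add: apply_prep1[OF ine])
    have L0: "Ph SL y = prep [False] (shift 1 (Ph SL y))" for y
    proof -
      have "\<not> Ph SL y 0" using Ph_at0[of SL y] by (cases "y 0") auto
      thus ?thesis using shift_split[of 0 "Ph SL y"] by simp
    qed
    have p: "\<forall>y i. i < length w2 \<longrightarrow> w2 ! i = subst (\<tau> @ [Y]) (prep [False] y) i"
    proof (intro allI impI)
      fix y i assume i: "i < length w2"
      have SP: "subst \<tau> (prep [False] z) = prep (morph \<tau> False) (subst \<tau> z)" for z
        by (simp add: subst_prep)
      have "subst (\<tau> @ [Y]) (prep [False] y) = subst \<tau> (prep [False] (Ph SL y))"
        using True by (simp add: subst_snoc' PF)
      also have "\<dots> = subst \<tau> (prep [False] (prep [False] (shift 1 (Ph SL y))))"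
        by (subst L0[of y]) (rule refl)
      also have "\<dots> = prep (morph \<tau> False) (subst \<tau> (prep [False] (shift 1 (Ph SL y))))"
        by (rule SP)
      finally have e: "subst (\<tau> @ [Y]) (prep [False] y) = prep (morph \<tau> False) (subst \<tau> (prep [False] (shift 1 (Ph SL y))))" .
      show "w2 ! i = subst (\<tau> @ [Y]) (prep [False] y) i"
      proof (cases "i < length (morph \<tau> False)")
        case True thus ?thesis unfolding e w2_def by (simp add: prep_def nth_append)
      next
        case False
        hence "i - length (morph \<tau> False) < length w" using i by (simp add: w2_def)
        thus ?thesis unfolding e w2_def using False wp by (simp add: prep_def nth_append)
      qed
    qed
    have s: "wsup0 (subst (\<tau> @ [Y]) v) = wsup (subst (\<tau> @ [Y]) v) \<and>
           prep w2 (wsup (subst (\<tau> @ [Y]) v)) = subst (\<tau> @ [Y]) (prep [False] (wsup v))"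
      if h: "wsup v = wsup0 v" for v
    proof -
      have st: "prep [False] (wsup (Ph SL v)) = Ph SL (wsup v)" "wsup0 (Ph SL v) = wsup (Ph SL v)"
        using stepL_sup[of v] h by auto
      have i: "prep w (wsup (subst \<tau> (Ph SL v))) = subst \<tau> (Ph SL (wsup v))"
        using ws[of "Ph SL v"] st by simp
      have "subst (\<tau> @ [Y]) (prep [False] (wsup v)) = prep (morph \<tau> False) (subst \<tau> (Ph SL (wsup v)))"
        using True by (simp add: subst_snoc' PF subst_prep morph_snoc)
      thus ?thesis using i ws[of "Ph SL v"] st True by (simp add: subst_snoc' w2_def prep_append)
    qed
    show ?thesis using l p s by blast
  qed
qed

lemma partB:
  assumes "\<sigma> \<noteq> []" "last \<sigma> \<in> {SM, SR}"
  shows "\<exists>w. suffix w (morph \<sigma> False) \<and>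
            (\<forall>u. wsup u = wsup0 u \<longrightarrow>
               wsup0 (subst \<sigma> u) = wsup (subst \<sigma> u)
             \<and> wsup (subst \<sigma> u) = prep w (subst \<sigma> (wsup u)))"
proof -
  define \<tau> where "\<tau> = butlast \<sigma>"
  define X where "X = last \<sigma>"
  have sig: "\<sigma> = \<tau> @ [X]" using assms(1) by (simp add: \<tau>_def X_def)
  have X: "X = SM \<or> X = SR" using assms(2) by (simp add: X_def)
  have iF: "img X False = [False, True]" using X by auto
  obtain w where wl: "length w \<le> length (morph \<tau> False) + length (morph \<tau> True)"
    and wp: "\<And>y i. i < length w \<Longrightarrow> w ! i = subst \<tau> (prep [False] y) i"
    and ws: "\<And>v. wsup v = wsup0 v \<Longrightarrow> wsup0 (subst \<tau> v) = wsup (subst \<tau> v) \<and>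
           prep w (wsup (subst \<tau> v)) = subst \<tau> (prep [False] (wsup v))"
    using Cstar[of \<tau>] by blast
  define P where "P = morph \<sigma> False"
  have P: "P = morph \<tau> False @ morph \<tau> True" unfolding P_def sig morph_snoc iF by simp
  have SP: "subst \<tau> (prep [False] (prep [True] z)) = prep P (subst \<tau> z)" for z
    by (simp add: subst_prep prep_append[symmetric] P)
  have wlen: "length w \<le> length P" using wl P by simp
  have wP: "w = take (length w) P"
  proof (rule nth_equalityI)
    show "length w = length (take (length w) P)" using wlen by simp
    fix i assume "i < length w"
    hence "w ! i = prep P (subst \<tau> (\<lambda>_. False)) i" using wp[of i "prep [True] (\<lambda>_. False)"] SP by simp
    also have "\<dots> = P ! i" using \<open>i < length w\<close> wlen by (simp add: prep_def)
    finally show "w ! i = take (length w) P ! i" using \<open>i < length w\<close> by simp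
  qed
  define w' where "w' = drop (length w) P"
  have Pw: "P = w @ w'" unfolding w'_def by (subst wP) simp
  have suf: "suffix w' (morph \<sigma> False)" unfolding P_def[symmetric] Pw suffix_def by blast
  have "wsup0 (subst \<sigma> u) = wsup (subst \<sigma> u) \<and> wsup (subst \<sigma> u) = prep w' (subst \<sigma> (wsup u))"
    if h: "wsup u = wsup0 u" for u
  proof -
    have st: "wsup (Ph X u) = prep [True] (Ph X (wsup u))" "wsup0 (Ph X u) = wsup (Ph X u)"
      using Ph_sup_MR[OF h X] by auto
    have a: "prep w (wsup (subst \<sigma> u)) = prep P (subst \<sigma> (wsup u))"
      using ws[of "Ph X u"] st by (simp add: sig subst_snoc' SP)
    hence "prep w (wsup (subst \<sigma> u)) = prep w (prep w' (subst \<sigma> (wsup u)))"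
      by (simp add: Pw prep_append)
    hence "wsup (subst \<sigma> u) = prep w' (subst \<sigma> (wsup u))" by (rule prep_inj)
    thus ?thesis using ws[of "Ph X u"] st by (simp add: sig subst_snoc')
  qed
  thus ?thesis using suf by blast
qed

lemma partC:
  assumes "\<sigma> \<noteq> []" "last \<sigma> = SL"
  shows "\<exists>w. (\<forall>i<length w. w ! i = subst \<sigma> (\<lambda>_. False) i) \<and>
            (\<forall>u. wsup u = wsup0 u \<longrightarrow>
               prep w (wsup0 (subst \<sigma> u)) = prep w (wsup (subst \<sigma> u))
             \<and> prep w (wsup (subst \<sigma> u)) = subst \<sigma> (wsup u))"
proof -
  define \<tau> where "\<tau> = butlast \<sigma>"
  have sig: "\<sigma> = \<tau> @ [SL]" using assms by (metis \<tau>_def append_butlast_last_id)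
  obtain w where wp: "\<And>y i. i < length w \<Longrightarrow> w ! i = subst \<tau> (prep [False] y) i"
    and ws: "\<And>v. wsup v = wsup0 v \<Longrightarrow> wsup0 (subst \<tau> v) = wsup (subst \<tau> v) \<and>
           prep w (wsup (subst \<tau> v)) = subst \<tau> (prep [False] (wsup v))"
    using Cstar[of \<tau>] by blast
  have p: "\<forall>i<length w. w ! i = subst \<sigma> (\<lambda>_. False) i"
    using wp[of _ "\<lambda>_. False"] by (simp add: sig subst_snoc' Ph_zero prep_zero)
  have "prep w (wsup0 (subst \<sigma> u)) = prep w (wsup (subst \<sigma> u))
             \<and> prep w (wsup (subst \<sigma> u)) = subst \<sigma> (wsup u)"
    if h: "wsup u = wsup0 u" for u
  proof -
    have st: "prep [False] (wsup (Ph SL u)) = Ph SL (wsup u)" "wsup0 (Ph SL u) = wsup (Ph SL u)"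
      using stepL_sup[of u] h by auto
    show ?thesis using ws[of "Ph SL u"] st by (simp add: sig subst_snoc')
  qed
  thus ?thesis using p by blast
qed

theorem lemma2p3:
  shows "(\<forall>u. winf (subst [SL] u) = subst [SL] (winf u))
    \<and> (\<forall>u. winf (subst [SR] u) = subst [SR] (winf u))
    \<and> (\<forall>u. prep [False] (wsup (subst [SL] u)) = subst [SL] (wsup u))
    \<and> (\<forall>u. winf u = winf1 u \<longrightarrow> winf (subst [SM] u) = prep [False] (subst [SM] (winf u)))
    \<and> (\<forall>u. wsup u = wsup0 u \<longrightarrow>
          wsup (subst [SR] u) = prep [True] (subst [SR] (wsup u))
        \<and> wsup (subst [SM] u) = prep [True] (subst [SM] (wsup u)))
    \<and> (\<forall>\<sigma>. \<exists>w. suffix w (morph \<sigma> True) \<and>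
          (\<forall>u. winf u = winf1 u \<longrightarrow>
             winf1 (subst \<sigma> u) = winf (subst \<sigma> u)
           \<and> winf (subst \<sigma> u) = prep w (subst \<sigma> (winf u))))
    \<and> (\<forall>\<sigma>. \<sigma> \<noteq> [] \<and> last \<sigma> \<in> {SM, SR} \<longrightarrow>
          (\<exists>w. suffix w (morph \<sigma> False) \<and>
            (\<forall>u. wsup u = wsup0 u \<longrightarrow>
               wsup0 (subst \<sigma> u) = wsup (subst \<sigma> u)
             \<and> wsup (subst \<sigma> u) = prep w (subst \<sigma> (wsup u)))))
    \<and> (\<forall>\<sigma>. \<sigma> \<noteq> [] \<and> last \<sigma> = SL \<longrightarrow>
          (\<exists>w. (\<forall>i<length w. w ! i = subst \<sigma> (\<lambda>_. False) i) \<and>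
            (\<forall>u. wsup u = wsup0 u \<longrightarrow>
               prep w (wsup0 (subst \<sigma> u)) = prep w (wsup (subst \<sigma> u))
             \<and> prep w (wsup (subst \<sigma> u)) = subst \<sigma> (wsup u))))"
proof -
  have s1: "\<And>X. subst [X] = Ph X" by (rule subst_single)
  have c1: "\<forall>u. winf (subst [SL] u) = subst [SL] (winf u)" by (simp add: s1 stepL_inf)
  have c2: "\<forall>u. winf (subst [SR] u) = subst [SR] (winf u)" by (simp add: s1 stepR_inf)
  have c3: "\<forall>u. prep [False] (wsup (subst [SL] u)) = subst [SL] (wsup u)" using stepL_sup by (simp add: s1)
  have c4: "\<forall>u. winf u = winf1 u \<longrightarrow> winf (subst [SM] u) = prep [False] (subst [SM] (winf u))"
    using stepM_inf by (simp add: s1)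
  have c5: "\<forall>u. wsup u = wsup0 u \<longrightarrow>
          wsup (subst [SR] u) = prep [True] (subst [SR] (wsup u))
        \<and> wsup (subst [SM] u) = prep [True] (subst [SM] (wsup u))"
    using stepR_sup stepM_sup by (simp add: s1)
  have c6: "\<forall>\<sigma>. \<exists>w. suffix w (morph \<sigma> True) \<and>
          (\<forall>u. winf u = winf1 u \<longrightarrow>
             winf1 (subst \<sigma> u) = winf (subst \<sigma> u)
           \<and> winf (subst \<sigma> u) = prep w (subst \<sigma> (winf u)))"
    using partA by blast
  have c7: "\<forall>\<sigma>. \<sigma> \<noteq> [] \<and> last \<sigma> \<in> {SM, SR} \<longrightarrow>
          (\<exists>w. suffix w (morph \<sigma> False) \<and>
            (\<forall>u. wsup u = wsup0 u \<longrightarrow>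
               wsup0 (subst \<sigma> u) = wsup (subst \<sigma> u)
             \<and> wsup (subst \<sigma> u) = prep w (subst \<sigma> (wsup u))))"
    using partB by blast
  have c8: "\<forall>\<sigma>. \<sigma> \<noteq> [] \<and> last \<sigma> = SL \<longrightarrow>
          (\<exists>w. (\<forall>i<length w. w ! i = subst \<sigma> (\<lambda>_. False) i) \<and>
            (\<forall>u. wsup u = wsup0 u \<longrightarrow>
               prep w (wsup0 (subst \<sigma> u)) = prep w (wsup (subst \<sigma> u))
             \<and> prep w (wsup (subst \<sigma> u)) = subst \<sigma> (wsup u)))"
    using partC by blast
  show ?thesis by (intro conjI c1 c2 c3 c4 c5 c6 c7 c8)
qed


end
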